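(* Let $n \ge 1$ and let $\boldsymbol{x} \in \mathbb{C}^n$ be a mixture of complex sinusoids, i.e. $\boldsymbol{x} = \sum_{k=1}^{K} s_k \boldsymbol{a}(f_k)$ for some $K$, $s_k \in \mathbb{C}$, $f_k \in [0,1)$. Then $$\|\boldsymbol{x}\|_{\mathcal{A}} = \inf_{r,\; d_j > 0,\; f_j \in [0,1)} \; \lim_{\beta \to 0^+} \left\{ \frac{1}{2}\sum_{j=1}^{r} d_j + \frac{1}{2}\, \boldsymbol{x}^H \boldsymbol{C}^{-1} \boldsymbol{x} \right\},$$ where $\boldsymbol{C} = \sum_{j=1}^{r} d_j\, \boldsymbol{a}(f_j)\boldsymbol{a}(f_j)^H + \beta \boldsymbol{I}$, the infimum is over all positive integers $r$, all $d_1,\dots,d_r>0$ and all $f_1,\dots,f_r \in [0,1)$, and the limit is allowed to take the value $+\infty$.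
   Context: For $f \in [0,1)$, the atom $\boldsymbol{a}(f) \in \mathbb{C}^n$ is $\boldsymbol{a}(f) = [1,\ e^{-2\pi i f},\ e^{-2\pi i 2f},\ \dots,\ e^{-2\pi i (n-1) f}]^T$. The atomic set is $\mathcal{A} = \{\boldsymbol{a}(f) : f \in [0,1)\}$, and the atomic norm of $\boldsymbol{x} \in \mathbb{C}^n$ is $\|\boldsymbol{x}\|_{\mathcal{A}} = \inf\{ \sum_{k=1}^{r} |s_k| : r \in \mathbb{N},\ s_k \in \mathbb{C},\ \boldsymbol{a}_k \in \mathcal{A},\ \boldsymbol{x} = \sum_{k=1}^{r} s_k \boldsymbol{a}_k \}$. $\boldsymbol{I}$ is the $n\times n$ identity, and $^H$ denotes conjugate transpose. *)

theory Defs
  imports "Jordan_Normal_Form.Gauss_Jordan_Elimination" "HOL-Library.Extended_Real"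
begin

definition atom :: "nat \<Rightarrow> real \<Rightarrow> complex vec" where
  "atom n f = vec n (\<lambda>k. cis (- 2 * pi * real k * f))"

definition atomic_norm :: "nat \<Rightarrow> complex vec \<Rightarrow> real" where
  "atomic_norm n x = Inf {(\<Sum>k<r. cmod (s k)) | (r::nat) (s::nat\<Rightarrow>complex) (f::nat\<Rightarrow>real).
      (\<forall>k<r. f k \<in> {0..<1}) \<and>
      x = vec n (\<lambda>i. \<Sum>k<r. s k * (atom n (f k) $ i))}"

definition cov_mat :: "nat \<Rightarrow> nat \<Rightarrow> (nat \<Rightarrow> real) \<Rightarrow> (nat \<Rightarrow> real) \<Rightarrow> real \<Rightarrow> complex mat" where
  "cov_mat n r d f \<beta> =
     mat n n (\<lambda>(i, l). \<Sum>j<r. complex_of_real (d j) * (atom n (f j) $ i) * cnj (atom n (f j) $ l))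
     + complex_of_real \<beta> \<cdot>\<^sub>m 1\<^sub>m n"

definition herm_form :: "complex vec \<Rightarrow> complex mat \<Rightarrow> complex" where
  "herm_form x M = conjugate x \<bullet> (M *\<^sub>v x)"

text \<open>(1/2) sum d_j + (1/2) x^H C^{-1} x (a real number since C is Hermitian).\<close>
definition objective :: "nat \<Rightarrow> complex vec \<Rightarrow> nat \<Rightarrow> (nat \<Rightarrow> real) \<Rightarrow> (nat \<Rightarrow> real) \<Rightarrow> real \<Rightarrow> real" where
  "objective n x r d f \<beta> =
     (1/2) * (\<Sum>j<r. d j) + (1/2) * Re (herm_form x (the (mat_inverse (cov_mat n r d f \<beta>))))"

end

theory Submission
  imports Defs "Jordan_Normal_Form.Determinant"
begin

definition W :: "nat \<Rightarrow> real \<Rightarrow> complex vec \<Rightarrow> complex" where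
  "W n fr v = (\<Sum>l<n. cnj (atom n fr $ l) * v $ l)"

definition Q :: "nat \<Rightarrow> nat \<Rightarrow> (nat \<Rightarrow> real) \<Rightarrow> (nat \<Rightarrow> real) \<Rightarrow> real \<Rightarrow> complex vec \<Rightarrow> real" where
  "Q n r d f \<beta> v = (\<Sum>j<r. d j * (cmod (W n (f j) v))\<^sup>2) + \<beta> * (\<Sum>i<n. (cmod (v $ i))\<^sup>2)"

lemma cov_carrier: "cov_mat n r d f \<beta> \<in> carrier_mat n n"
  unfolding cov_mat_def by auto

lemma cov_mulv:
  assumes v: "v \<in> carrier_vec n"
  shows "cov_mat n r d f \<beta> *\<^sub>v v =
    vec n (\<lambda>i. (\<Sum>j<r. complex_of_real (d j) * W n (f j) v * atom n (f j) $ i) + complex_of_real \<beta> * v $ i)"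
proof (rule eq_vecI)
  fix i assume i: "i < dim_vec (vec n (\<lambda>i. (\<Sum>j<r. complex_of_real (d j) * W n (f j) v * atom n (f j) $ i) + complex_of_real \<beta> * v $ i))"
  hence i: "i < n" by simp
  have "(cov_mat n r d f \<beta> *\<^sub>v v) $ i = (\<Sum>l<n. ((\<Sum>j<r. complex_of_real (d j) * (atom n (f j) $ i) * cnj (atom n (f j) $ l)) + (if i = l then complex_of_real \<beta> else 0)) * v $ l)"
    using i v unfolding cov_mat_def mult_mat_vec_def scalar_prod_def
    by (auto intro!: sum.cong simp: lessThan_atLeast0)
  also have "\<dots> = (\<Sum>l<n. (\<Sum>j<r. complex_of_real (d j) * (atom n (f j) $ i) * cnj (atom n (f j) $ l) * v $ l)) + (\<Sum>l<n. (if i = l then complex_of_real \<beta> else 0) * v $ l)"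
    by (simp add: distrib_right sum.distrib sum_distrib_right)
  also have "\<dots> = (\<Sum>j<r. complex_of_real (d j) * W n (f j) v * atom n (f j) $ i) + complex_of_real \<beta> * v $ i"
  proof -
    have 1: "(\<Sum>l<n. (if i = l then complex_of_real \<beta> else 0) * v $ l) = complex_of_real \<beta> * v $ i"
      using i by (simp add: if_distrib[of "\<lambda>t. t * _"] sum.delta cong: if_cong)
    have 2: "(\<Sum>l<n. (\<Sum>j<r. complex_of_real (d j) * (atom n (f j) $ i) * cnj (atom n (f j) $ l) * v $ l))
       = (\<Sum>j<r. complex_of_real (d j) * W n (f j) v * atom n (f j) $ i)"
      by (subst sum.swap) (simp add: W_def sum_distrib_left mult_ac)
    show ?thesis using 1 2 by simp
  qed
  finally show "(cov_mat n r d f \<beta> *\<^sub>v v) $ i = vec n (\<lambda>i. (\<Sum>j<r. complex_of_real (d j) * W n (f j) v * atom n (f j) $ i) + complex_of_real \<beta> * v $ i) $ i"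
    using i by simp
qed (use v in \<open>auto simp: cov_mat_def\<close>)

lemma conj_lin:
  assumes v: "v \<in> carrier_vec n" and z: "z \<in> carrier_vec n"
  shows "conjugate (vec n (\<lambda>i. (\<Sum>j<r. c j * atom n (f j) $ i) + b * z $ i)) \<bullet> v
     = (\<Sum>j<r. cnj (c j) * W n (f j) v) + cnj b * (\<Sum>i<n. cnj (z $ i) * v $ i)"
proof -
  have "conjugate (vec n (\<lambda>i. (\<Sum>j<r. c j * atom n (f j) $ i) + b * z $ i)) \<bullet> v
     = (\<Sum>i<n. ((\<Sum>j<r. cnj (c j) * cnj (atom n (f j) $ i)) + cnj b * cnj (z $ i)) * v $ i)"
    using v unfolding scalar_prod_def by (auto simp: lessThan_atLeast0)
  also have "\<dots> = (\<Sum>i<n. (\<Sum>j<r. cnj (c j) * cnj (atom n (f j) $ i) * v $ i)) + (\<Sum>i<n. cnj b * cnj (z $ i) * v $ i)"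
    by (simp add: distrib_right sum.distrib sum_distrib_right)
  also have "\<dots> = (\<Sum>j<r. cnj (c j) * W n (f j) v) + cnj b * (\<Sum>i<n. cnj (z $ i) * v $ i)"
    by (subst sum.swap) (simp add: W_def sum_distrib_left mult_ac)
  finally show ?thesis .
qed

lemma cnj_mult_self: "cnj a * a = complex_of_real ((cmod a)\<^sup>2)"
  by (simp add: complex_norm_square mult.commute del: of_real_power)

lemma Q_conj:
  assumes v: "v \<in> carrier_vec n"
  shows "conjugate (cov_mat n r d f \<beta> *\<^sub>v v) \<bullet> v = complex_of_real (Q n r d f \<beta> v)"
proof -
  have "conjugate (cov_mat n r d f \<beta> *\<^sub>v v) \<bullet> v =
     (\<Sum>j<r. cnj (complex_of_real (d j) * W n (f j) v) * W n (f j) v) + cnj (complex_of_real \<beta>) * (\<Sum>i<n. cnj (v $ i) * v $ i)"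
    unfolding cov_mulv[OF v] using conj_lin[OF v v, where c="\<lambda>j. complex_of_real (d j) * W n (f j) v" and f=f and r=r and b="complex_of_real \<beta>"]
    by (simp add: mult.assoc)
  also have "\<dots> = complex_of_real (Q n r d f \<beta> v)"
    by (simp add: Q_def cnj_mult_self mult.assoc)
  finally show ?thesis .
qed

lemma Q_nonneg_parts:
  assumes "\<forall>j<r. d j \<ge> 0"
  shows "0 \<le> (\<Sum>j<r. d j * (cmod (W n (f j) v))\<^sup>2)"
  using assms by (intro sum_nonneg) auto

lemma herm_solve:
  assumes x: "x \<in> carrier_vec n" and b: "\<beta> > 0" and d: "\<forall>j<r. d j \<ge> 0"
  obtains y where "y \<in> carrier_vec n"
    "x = cov_mat n r d f \<beta> *\<^sub>v y"
    "herm_form x (the (mat_inverse (cov_mat n r d f \<beta>))) = complex_of_real (Q n r d f \<beta> y)"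
proof -
  let ?C = "cov_mat n r d f \<beta>"
  have C: "?C \<in> carrier_mat n n" by (rule cov_carrier)
  have "det ?C \<noteq> 0"
  proof
    assume "det ?C = 0"
    then obtain v where v: "v \<in> carrier_vec n" "v \<noteq> 0\<^sub>v n" "?C *\<^sub>v v = 0\<^sub>v n"
      using det_0_iff_vec_prod_zero[OF C] by blast
    have "complex_of_real (Q n r d f \<beta> v) = conjugate (?C *\<^sub>v v) \<bullet> v"
      using Q_conj[OF v(1), of r d f \<beta>] by simp
    also have "\<dots> = conjugate (0\<^sub>v n) \<bullet> v" using v(3) by simp
    also have "\<dots> = 0" using v(1) by (simp add: scalar_prod_def conjugate_vec_def)
    finally have Q0: "Q n r d f \<beta> v = 0" by simp
    have s0: "(\<Sum>i<n. (cmod (v $ i))\<^sup>2) = 0"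
    proof -
      have "0 \<le> (\<Sum>i<n. (cmod (v $ i))\<^sup>2)" by (intro sum_nonneg) auto
      moreover have "\<beta> * (\<Sum>i<n. (cmod (v $ i))\<^sup>2) \<le> 0"
        using Q0 Q_nonneg_parts[OF d, of n f v] unfolding Q_def by linarith
      ultimately show ?thesis using b by (simp add: mult_le_0_iff)
    qed
    have "v = 0\<^sub>v n"
    proof (rule eq_vecI)
      fix i assume "i < dim_vec (0\<^sub>v n)"
      hence i: "i < n" by simp
      have "(cmod (v $ i))\<^sup>2 = 0"
        using s0 sum_nonneg_eq_0_iff[of "{..<n}" "\<lambda>i. (cmod (v $ i))\<^sup>2"] i by auto
      thus "v $ i = 0\<^sub>v n $ i" using i by simp
    qed (use v in auto)
    with v(2) show False by simp
  qed
  hence "?C \<in> Units (ring_mat TYPE(complex) n n)" by (rule det_non_zero_imp_unit[OF C])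
  then obtain B where B: "mat_inverse ?C = Some B"
    using mat_inverse(1)[OF C, where b=n] by (cases "mat_inverse ?C") auto
  from mat_inverse(2)[OF C B] have CB: "?C * B = 1\<^sub>m n" and Bc: "B \<in> carrier_mat n n" by auto
  define y where "y = B *\<^sub>v x"
  have y: "y \<in> carrier_vec n" unfolding y_def using Bc x by auto
  have xy: "x = ?C *\<^sub>v y"
    unfolding y_def using assoc_mult_mat_vec[OF C Bc x] CB x by simp
  have "herm_form x (the (mat_inverse ?C)) = conjugate x \<bullet> y"
    unfolding herm_form_def B y_def by simp
  also have "\<dots> = complex_of_real (Q n r d f \<beta> y)"
    using Q_conj[OF y] xy by simp
  finally show ?thesis using that y xy by blast
qed

lemma herm_Re:
  assumes x: "x \<in> carrier_vec n" and b: "\<beta> > 0" and d: "\<forall>j<r. d j \<ge> 0"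
  obtains y where "y \<in> carrier_vec n"
    "x = cov_mat n r d f \<beta> *\<^sub>v y"
    "Re (herm_form x (the (mat_inverse (cov_mat n r d f \<beta>)))) = Q n r d f \<beta> y"
  using herm_solve[OF x b d] by (metis Re_complex_of_real)

lemma two_re_le: "2 * Re (cnj a * b) \<le> (cmod a)\<^sup>2 + (cmod b)\<^sup>2"
proof -
  have "0 \<le> (Re a - Re b)\<^sup>2 + (Im a - Im b)\<^sup>2" by simp
  thus ?thesis unfolding cmod_power2 by (simp add: power2_eq_square algebra_simps)
qed

lemma variational:
  assumes y: "y \<in> carrier_vec n" and v: "v \<in> carrier_vec n"
    and b: "\<beta> \<ge> 0" and d: "\<forall>j<r. d j \<ge> 0"
  shows "2 * Re (conjugate (cov_mat n r d f \<beta> *\<^sub>v y) \<bullet> v) - Q n r d f \<beta> v \<le> Q n r d f \<beta> y"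
proof -
  have e: "conjugate (cov_mat n r d f \<beta> *\<^sub>v y) \<bullet> v =
     (\<Sum>j<r. cnj (complex_of_real (d j) * W n (f j) y) * W n (f j) v) + cnj (complex_of_real \<beta>) * (\<Sum>i<n. cnj (y $ i) * v $ i)"
    unfolding cov_mulv[OF y] using conj_lin[OF v y, where c="\<lambda>j. complex_of_real (d j) * W n (f j) y" and f=f and r=r and b="complex_of_real \<beta>"]
    by (simp add: mult.assoc)
  have "2 * Re (conjugate (cov_mat n r d f \<beta> *\<^sub>v y) \<bullet> v) =
     (\<Sum>j<r. d j * (2 * Re (cnj (W n (f j) y) * W n (f j) v))) + \<beta> * (\<Sum>i<n. 2 * Re (cnj (y $ i) * v $ i))"
    unfolding e by (simp add: sum_distrib_left sum_distrib_right mult_ac)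
  also have "\<dots> \<le> (\<Sum>j<r. d j * ((cmod (W n (f j) y))\<^sup>2 + (cmod (W n (f j) v))\<^sup>2)) + \<beta> * (\<Sum>i<n. (cmod (y $ i))\<^sup>2 + (cmod (v $ i))\<^sup>2)"
    using d b by (intro add_mono sum_mono mult_left_mono two_re_le) auto
  also have "\<dots> = Q n r d f \<beta> y + Q n r d f \<beta> v"
    by (simp add: Q_def sum.distrib distrib_left distrib_right)
  finally show ?thesis by simp
qed

lemma herm_antitone:
  assumes x: "x \<in> carrier_vec n" and b1: "0 < \<beta>1" and b12: "\<beta>1 \<le> \<beta>2" and d: "\<forall>j<r. d j \<ge> 0"
  shows "Re (herm_form x (the (mat_inverse (cov_mat n r d f \<beta>2)))) \<le> Re (herm_form x (the (mat_inverse (cov_mat n r d f \<beta>1))))"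
proof -
  have b2: "0 < \<beta>2" using b1 b12 by simp
  obtain y1 where y1: "y1 \<in> carrier_vec n" "x = cov_mat n r d f \<beta>1 *\<^sub>v y1"
    "Re (herm_form x (the (mat_inverse (cov_mat n r d f \<beta>1)))) = Q n r d f \<beta>1 y1"
    using herm_Re[OF x b1 d] by blast
  obtain y2 where y2: "y2 \<in> carrier_vec n" "x = cov_mat n r d f \<beta>2 *\<^sub>v y2"
    "Re (herm_form x (the (mat_inverse (cov_mat n r d f \<beta>2)))) = Q n r d f \<beta>2 y2"
    using herm_Re[OF x b2 d] by blast
  have v: "2 * Re (conjugate x \<bullet> y2) - Q n r d f \<beta>1 y2 \<le> Q n r d f \<beta>1 y1"
    using variational[OF y1(1) y2(1), of \<beta>1 r d f] b1 d y1(2) by simp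
  have c: "conjugate x \<bullet> y2 = complex_of_real (Q n r d f \<beta>2 y2)"
    using Q_conj[OF y2(1)] y2(2) by simp
  have q: "Q n r d f \<beta>1 y2 \<le> Q n r d f \<beta>2 y2"
    unfolding Q_def using b12 by (intro add_left_mono mult_right_mono sum_nonneg) auto
  show ?thesis using v c q y1(3) y2(3) by simp
qed

lemma antitone_lim:
  fixes g :: "real \<Rightarrow> ereal"
  assumes mono: "\<And>a b. 0 < a \<Longrightarrow> a \<le> b \<Longrightarrow> g b \<le> g a"
  shows "(g \<longlongrightarrow> (SUP \<beta>\<in>{0<..}. g \<beta>)) (at_right 0)"
proof (rule order_tendstoI)
  fix a assume "a < (SUP \<beta>\<in>{0<..}. g \<beta>)"
  then obtain b0 where b0: "b0 > 0" "a < g b0" by (auto simp: less_SUP_iff)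
  show "\<forall>\<^sub>F \<beta> in at_right 0. a < g \<beta>"
    unfolding eventually_at_right_field
    using b0 mono by (intro exI[of _ b0]) (auto intro: less_le_trans)
next
  fix a assume a: "(SUP \<beta>\<in>{0<..}. g \<beta>) < a"
  show "\<forall>\<^sub>F \<beta> in at_right 0. g \<beta> < a"
    using eventually_at_right_less[of 0]
  proof (rule eventually_mono)
    fix \<beta> :: real assume "0 < \<beta>"
    hence "g \<beta> \<le> (SUP \<beta>\<in>{0<..}. g \<beta>)" by (intro SUP_upper) auto
    thus "g \<beta> < a" using a by simp
  qed
qed

lemma objective_lim:
  assumes x: "x \<in> carrier_vec n" and d: "\<forall>j<r. d j \<ge> 0"
  shows "((\<lambda>\<beta>. ereal (objective n x r d f \<beta>)) \<longlongrightarrow> Lim (at_right 0) (\<lambda>\<beta>. ereal (objective n x r d f \<beta>))) (at_right 0)"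
proof -
  have "((\<lambda>\<beta>. ereal (objective n x r d f \<beta>)) \<longlongrightarrow> (SUP \<beta>\<in>{0<..}. ereal (objective n x r d f \<beta>))) (at_right 0)"
    by (rule antitone_lim) (use herm_antitone[OF x _ _ d] in \<open>auto simp: objective_def\<close>)
  moreover have "Lim (at_right 0) (\<lambda>\<beta>. ereal (objective n x r d f \<beta>)) = (SUP \<beta>\<in>{0<..}. ereal (objective n x r d f \<beta>))"
    by (rule tendsto_Lim) (use calculation in auto)
  ultimately show ?thesis by simp
qed

lemma unity_sum:
  fixes t :: int and n :: nat
  assumes n: "n > 0" and t1: "- int n < t" and t2: "t < int n"
  shows "(\<Sum>m<n. cis (2 * pi * real_of_int t * real m / real n)) = (if t = 0 then of_nat n else 0)"
proof -
  define z where "z = cis (2 * pi * real_of_int t / real n)"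
  have zm: "cis (2 * pi * real_of_int t * real m / real n) = z ^ m" for m
    unfolding z_def DeMoivre by (simp add: mult_ac)
  have zn: "z ^ n = 1"
  proof -
    have "real n * (2 * pi * real_of_int t / real n) = (2 * pi) * real_of_int t" using n by simp
    hence "z ^ n = cis ((2 * pi) * real_of_int t)" unfolding z_def DeMoivre by simp
    also have "\<dots> = 1" by (simp add: complex_eq_iff)
    finally show ?thesis .
  qed
  show ?thesis
  proof (cases "t = 0")
    case True thus ?thesis by simp
  next
    case False
    have "z \<noteq> 1"
    proof
      assume "z = 1"
      hence "cos (2 * pi * real_of_int t / real n) = 1" unfolding z_def by (simp add: complex_eq_iff)
      then obtain k :: int where k: "2 * pi * real_of_int t / real n = real_of_int k * 2 * pi"
        by (auto simp: cos_one_2pi_int)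
      hence "real_of_int t = real_of_int k * real n" using n by (simp add: field_simps)
      hence tk: "t = k * int n" by (metis of_int_eq_iff of_int_mult of_int_of_nat_eq)
      show False
      proof (cases "k = 0")
        case True thus False using tk False by simp
      next
        case kn: False
        have "\<bar>t\<bar> = \<bar>k\<bar> * int n" using tk by (simp add: abs_mult)
        moreover have "\<bar>k\<bar> \<ge> 1" using kn by simp
        ultimately have "\<bar>t\<bar> \<ge> int n" using n by (metis mult_le_cancel_right1 of_nat_0_less_iff order_less_imp_not_less mult.commute)
        thus False using t1 t2 by simp
      qed
    qed
    thus ?thesis using False by (simp add: zm sum_gp_strict zn)
  qed
qed

definition dc :: "nat \<Rightarrow> complex vec \<Rightarrow> nat \<Rightarrow> complex" where
  "dc n v m = (1 / of_nat n) * (\<Sum>k<n. v $ k * cis (2 * pi * real k * real m / real n))"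

lemma atom_index: "i < n \<Longrightarrow> atom n fr $ i = cis (- 2 * pi * real i * fr)"
  unfolding atom_def by simp

lemma dft:
  assumes n: "n > 0" and i: "i < n"
  shows "(\<Sum>m<n. dc n v m * atom n (real m / real n) $ i) = v $ i"
proof -
  let ?e = "\<lambda>k m. cis (2 * pi * real_of_int (int k - int i) * real m / real n)"
  have "(\<Sum>m<n. dc n v m * atom n (real m / real n) $ i)
      = (\<Sum>m<n. (1 / of_nat n) * (\<Sum>k<n. v $ k * ?e k m))"
  proof (rule sum.cong[OF refl])
    fix m assume "m \<in> {..<n}"
    have "dc n v m * atom n (real m / real n) $ i =
      (1 / of_nat n) * (\<Sum>k<n. v $ k * (cis (2 * pi * real k * real m / real n) * cis (- 2 * pi * real i * (real m / real n))))"
      using i unfolding dc_def atom_index[OF i] by (simp add: sum_distrib_right mult.assoc)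
    also have "\<dots> = (1 / of_nat n) * (\<Sum>k<n. v $ k * ?e k m)"
    proof -
      have "cis (2 * pi * real k * real m / real n) * cis (- 2 * pi * real i * (real m / real n)) = ?e k m" for k
      proof -
        have "2 * pi * real k * real m / real n + - 2 * pi * real i * (real m / real n) = 2 * pi * real_of_int (int k - int i) * real m / real n"
          using n by (simp add: field_simps)
        thus ?thesis by (simp only: cis_mult)
      qed
      thus ?thesis by simp
    qed
    finally show "dc n v m * atom n (real m / real n) $ i = (1 / of_nat n) * (\<Sum>k<n. v $ k * ?e k m)" .
  qed
  also have "\<dots> = (1 / of_nat n) * (\<Sum>m<n. \<Sum>k<n. v $ k * ?e k m)"
    by (simp only: sum_distrib_left)
  also have "\<dots> = (1 / of_nat n) * (\<Sum>k<n. \<Sum>m<n. v $ k * ?e k m)"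
    by (subst sum.swap) (rule refl)
  also have "\<dots> = (1 / of_nat n) * (\<Sum>k<n. v $ k * (\<Sum>m<n. ?e k m))"
    by (simp only: sum_distrib_left)
  also have "\<dots> = (1 / of_nat n) * (\<Sum>k<n. v $ k * (if k = i then of_nat n else 0))"
  proof -
    have u: "(\<Sum>m<n. ?e k m) = (if k = i then of_nat n else 0)" if "k \<in> {..<n}" for k
    proof -
      have "(\<Sum>m<n. ?e k m) = (if int k - int i = 0 then of_nat n else 0)"
        by (rule unity_sum) (use that i n in auto)
      thus ?thesis by simp
    qed
    have "(\<Sum>k<n. v $ k * (\<Sum>m<n. ?e k m)) = (\<Sum>k<n. v $ k * (if k = i then of_nat n else 0))"
      by (rule sum.cong[OF refl]) (simp only: u)
    thus ?thesis by (rule arg_cong)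
  qed
  also have "\<dots> = v $ i"
    using i n by (simp add: if_distrib[of "\<lambda>t. _ * t"] sum.delta' cong: if_cong)
  finally show ?thesis .
qed

lemma dc_bound: "cmod (dc n v m) \<le> (1 / real n) * (\<Sum>k<n. cmod (v $ k))"
proof -
  have "cmod (dc n v m) = (1 / real n) * cmod (\<Sum>k<n. v $ k * cis (2 * pi * real k * real m / real n))"
    unfolding dc_def by (simp add: norm_mult norm_divide)
  also have "\<dots> \<le> (1 / real n) * (\<Sum>k<n. cmod (v $ k * cis (2 * pi * real k * real m / real n)))"
    by (intro mult_left_mono norm_sum) auto
  also have "\<dots> = (1 / real n) * (\<Sum>k<n. cmod (v $ k))" by (simp add: norm_mult)
  finally show ?thesis .
qed

lemma an_le:
  fixes R :: nat and S :: "nat \<Rightarrow> complex" and F :: "nat \<Rightarrow> real"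
  assumes "\<forall>k<R. F k \<in> {0..<1}" and "x = vec n (\<lambda>i. \<Sum>k<R. S k * (atom n (F k) $ i))"
  shows "atomic_norm n x \<le> (\<Sum>k<R. cmod (S k))"
  unfolding atomic_norm_def
proof (rule cInf_lower)
  show "(\<Sum>k<R. cmod (S k)) \<in> {(\<Sum>k<r. cmod (s k)) | (r::nat) (s::nat\<Rightarrow>complex) (f::nat\<Rightarrow>real).
      (\<forall>k<r. f k \<in> {0..<1}) \<and> x = vec n (\<lambda>i. \<Sum>k<r. s k * (atom n (f k) $ i))}"
    apply (rule CollectI)
    using assms by blast
  show "bdd_below {(\<Sum>k<r. cmod (s k)) | (r::nat) (s::nat\<Rightarrow>complex) (f::nat\<Rightarrow>real).
      (\<forall>k<r. f k \<in> {0..<1}) \<and> x = vec n (\<lambda>i. \<Sum>k<r. s k * (atom n (f k) $ i))}"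
    by (rule bdd_belowI[of _ 0]) (auto intro: sum_nonneg)
qed

lemma sum_split_add: "(\<Sum>k<r+(n::nat). g k) = (\<Sum>k<r. g k) + (\<Sum>m<n. g (r+m))"
  by (induct n) (auto simp: add.assoc)

lemma amgm1: assumes "(d::real) \<ge> 0" shows "d * w \<le> d / 2 + d * w\<^sup>2 / 2"
proof -
  have "0 \<le> d * (w - 1)\<^sup>2" using assms by simp
  moreover have "d * (w - 1)\<^sup>2 = d + d * w\<^sup>2 - 2 * (d * w)" by (simp add: power2_eq_square algebra_simps)
  ultimately show ?thesis by linarith
qed

lemma amgm2: assumes "(b::real) \<ge> 0" shows "b * w - b / 2 \<le> b * w\<^sup>2 / 2"
  using amgm1[OF assms, of w] by linarith

lemma lower_bound:
  assumes n: "n > 0" and x: "x \<in> carrier_vec n" and b: "\<beta> > 0"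
    and d: "\<forall>j<r. d j > 0 \<and> f j \<in> {0..<1}"
  shows "atomic_norm n x - real n * \<beta> / 2 \<le> objective n x r d f \<beta>"
proof -
  have d0: "\<forall>j<r. d j \<ge> 0" using d by auto
  obtain y where y: "y \<in> carrier_vec n" "x = cov_mat n r d f \<beta> *\<^sub>v y"
    "Re (herm_form x (the (mat_inverse (cov_mat n r d f \<beta>)))) = Q n r d f \<beta> y"
    using herm_Re[OF x b d0] by blast
  define c where "c j = complex_of_real (d j) * W n (f j) y" for j
  define S where "S k = (if k < r then c k else complex_of_real \<beta> * dc n y (k - r))" for k
  define F where "F k = (if k < r then f k else real (k - r) / real n)" for k
  have F: "\<forall>k<r+n. F k \<in> {0..<1}"
    using d n by (auto simp: F_def)
  have xS: "x = vec n (\<lambda>i. \<Sum>k<r+n. S k * (atom n (F k) $ i))"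
  proof (rule eq_vecI)
    show "dim_vec x = dim_vec (vec n (\<lambda>i. \<Sum>k<r+n. S k * (atom n (F k) $ i)))" using x by simp
  next
    fix i assume "i < dim_vec (vec n (\<lambda>i. \<Sum>k<r+n. S k * (atom n (F k) $ i)))"
    hence i: "i < n" by simp
    have "x $ i = (\<Sum>j<r. c j * atom n (f j) $ i) + complex_of_real \<beta> * y $ i"
      using y(2) i by (simp add: cov_mulv[OF y(1)] c_def)
    also have "complex_of_real \<beta> * y $ i = (\<Sum>m<n. complex_of_real \<beta> * dc n y m * atom n (real m / real n) $ i)"
      using dft[OF n i, of y] by (simp add: mult.assoc flip: sum_distrib_left)
    also have "(\<Sum>j<r. c j * atom n (f j) $ i) + (\<Sum>m<n. complex_of_real \<beta> * dc n y m * atom n (real m / real n) $ i)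
        = (\<Sum>k<r+n. S k * (atom n (F k) $ i))"
      unfolding sum_split_add by (simp add: S_def F_def)
    finally show "x $ i = vec n (\<lambda>i. \<Sum>k<r+n. S k * (atom n (F k) $ i)) $ i" using i by simp
  qed
  have "atomic_norm n x \<le> (\<Sum>k<r+n. cmod (S k))" by (rule an_le[OF F xS])
  also have "\<dots> = (\<Sum>j<r. d j * cmod (W n (f j) y)) + (\<Sum>m<n. \<beta> * cmod (dc n y m))"
    unfolding sum_split_add using d0 b by (simp add: S_def c_def norm_mult)
  also have "(\<Sum>m<n. \<beta> * cmod (dc n y m)) \<le> (\<Sum>m<n. \<beta> * ((1 / real n) * (\<Sum>k<n. cmod (y $ k))))"
    by (intro sum_mono mult_left_mono dc_bound) (use b in auto)
  also have "\<dots> = \<beta> * (\<Sum>k<n. cmod (y $ k))" using n by simp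
  finally have an: "atomic_norm n x \<le> (\<Sum>j<r. d j * cmod (W n (f j) y)) + \<beta> * (\<Sum>k<n. cmod (y $ k))"
    by simp
  have A: "(\<Sum>j<r. d j * cmod (W n (f j) y)) \<le> (\<Sum>j<r. d j / 2 + d j * (cmod (W n (f j) y))\<^sup>2 / 2)"
    by (rule sum_mono) (use d0 amgm1 in auto)
  have B: "(\<Sum>k<n. \<beta> * cmod (y $ k) - \<beta> / 2) \<le> (\<Sum>k<n. \<beta> * (cmod (y $ k))\<^sup>2 / 2)"
    by (rule sum_mono) (use b amgm2 in auto)
  have B': "(\<Sum>k<n. \<beta> * cmod (y $ k) - \<beta> / 2) = \<beta> * (\<Sum>k<n. cmod (y $ k)) - real n * \<beta> / 2"
    by (simp add: sum_subtractf sum_distrib_left)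
  have obj: "objective n x r d f \<beta> = (\<Sum>j<r. d j / 2 + d j * (cmod (W n (f j) y))\<^sup>2 / 2) + (\<Sum>k<n. \<beta> * (cmod (y $ k))\<^sup>2 / 2)"
    unfolding objective_def y(3) Q_def by (simp add: sum.distrib sum_distrib_left sum_divide_distrib algebra_simps)
  show ?thesis using an A B B' obj by linarith
qed

lemma conj_lin0:
  assumes v: "v \<in> carrier_vec n"
  shows "conjugate (vec n (\<lambda>i. (\<Sum>j<r. c j * atom n (f j) $ i))) \<bullet> v
     = (\<Sum>j<r. cnj (c j) * W n (f j) v)"
proof -
  have "conjugate (vec n (\<lambda>i. (\<Sum>j<r. c j * atom n (f j) $ i))) \<bullet> v
     = (\<Sum>i<n. (\<Sum>j<r. cnj (c j) * cnj (atom n (f j) $ i)) * v $ i)"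
    using v unfolding scalar_prod_def by (auto simp: lessThan_atLeast0)
  also have "\<dots> = (\<Sum>i<n. (\<Sum>j<r. cnj (c j) * cnj (atom n (f j) $ i) * v $ i))"
    by (simp add: sum_distrib_right)
  also have "\<dots> = (\<Sum>j<r. cnj (c j) * W n (f j) v)"
    by (subst sum.swap) (simp add: W_def sum_distrib_left mult_ac)
  finally show ?thesis .
qed

lemma amgm3: assumes "(a::real) \<ge> 0" "\<delta> \<ge> 0" shows "2 * a * w - (a + \<delta>) * w\<^sup>2 \<le> a"
proof -
  have "0 \<le> a * (w - 1)\<^sup>2" using assms by simp
  moreover have "0 \<le> \<delta> * w\<^sup>2" using assms by simp
  moreover have "a * (w - 1)\<^sup>2 = a * w\<^sup>2 - 2 * a * w + a" by (simp add: power2_eq_square algebra_simps)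
  ultimately show ?thesis by (simp add: algebra_simps)
qed

lemma upper_bound:
  fixes R :: nat and s :: "nat \<Rightarrow> complex" and F :: "nat \<Rightarrow> real"
  assumes x: "x \<in> carrier_vec n" and xs: "x = vec n (\<lambda>i. \<Sum>k<R. s k * (atom n (F k) $ i))"
    and b: "\<beta> > 0" and dl: "\<delta> > 0"
  shows "objective n x R (\<lambda>j. cmod (s j) + \<delta>) F \<beta> \<le> (\<Sum>k<R. cmod (s k)) + real R * \<delta> / 2"
proof -
  let ?d = "\<lambda>j. cmod (s j) + \<delta>"
  have d0: "\<forall>j<R. ?d j \<ge> 0" using dl by auto
  obtain y where y: "y \<in> carrier_vec n" "x = cov_mat n R ?d F \<beta> *\<^sub>v y"
    "Re (herm_form x (the (mat_inverse (cov_mat n R ?d F \<beta>)))) = Q n R ?d F \<beta> y"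
    using herm_Re[OF x b d0] by blast
  have c1: "conjugate x \<bullet> y = (\<Sum>j<R. cnj (s j) * W n (F j) y)"
    using conj_lin0[OF y(1), of s F R] xs by simp
  have c2: "conjugate x \<bullet> y = complex_of_real (Q n R ?d F \<beta> y)"
    using Q_conj[OF y(1)] y(2) by simp
  have "Q n R ?d F \<beta> y = Re (\<Sum>j<R. cnj (s j) * W n (F j) y)"
    using c1 c2 by (metis Re_complex_of_real)
  also have "\<dots> \<le> cmod (\<Sum>j<R. cnj (s j) * W n (F j) y)" by (rule complex_Re_le_cmod)
  also have "\<dots> \<le> (\<Sum>j<R. cmod (s j) * cmod (W n (F j) y))"
    by (rule order_trans[OF norm_sum]) (simp add: norm_mult)
  finally have q1: "Q n R ?d F \<beta> y \<le> (\<Sum>j<R. cmod (s j) * cmod (W n (F j) y))" .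
  have q2: "(\<Sum>j<R. ?d j * (cmod (W n (F j) y))\<^sup>2) \<le> Q n R ?d F \<beta> y"
    unfolding Q_def using b by (simp add: sum_nonneg)
  have q3: "(\<Sum>j<R. 2 * cmod (s j) * cmod (W n (F j) y) - ?d j * (cmod (W n (F j) y))\<^sup>2) \<le> (\<Sum>j<R. cmod (s j))"
    by (rule sum_mono) (use dl amgm3 in auto)
  have q4: "(\<Sum>j<R. 2 * cmod (s j) * cmod (W n (F j) y) - ?d j * (cmod (W n (F j) y))\<^sup>2)
      = 2 * (\<Sum>j<R. cmod (s j) * cmod (W n (F j) y)) - (\<Sum>j<R. ?d j * (cmod (W n (F j) y))\<^sup>2)"
    by (simp add: sum_subtractf sum_distrib_left mult.assoc)
  have Qle: "Q n R ?d F \<beta> y \<le> (\<Sum>j<R. cmod (s j))" using q1 q2 q3 q4 by linarith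
  have "objective n x R ?d F \<beta> = (1/2) * (\<Sum>j<R. cmod (s j)) + real R * \<delta> / 2 + (1/2) * Q n R ?d F \<beta> y"
    unfolding objective_def y(3) by (simp add: sum.distrib)
  thus ?thesis using Qle by linarith
qed

theorem theorem1:
  fixes n :: nat and x :: "complex vec" and K :: nat and s :: "nat \<Rightarrow> complex" and fk :: "nat \<Rightarrow> real"
  assumes "n \<ge> 1"
    and "x \<in> carrier_vec n"
    and "\<forall>k<K. fk k \<in> {0..<1}"
    and "x = vec n (\<lambda>i. \<Sum>k<K. s k * (atom n (fk k) $ i))"
  shows "ereal (atomic_norm n x) =
    Inf {Lim (at_right 0) (\<lambda>\<beta>. ereal (objective n x r d f \<beta>)) | r d f.
           r > 0 \<and> (\<forall>j<r. d j > 0 \<and> f j \<in> {0..<1})}" (is "_ = Inf ?S")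
proof -
  have n: "n > 0" using assms(1) by simp
  have x: "x \<in> carrier_vec n" by fact
  have ge: "ereal (atomic_norm n x) \<le> Inf ?S"
  proof (rule Inf_greatest)
    fix z assume "z \<in> ?S"
    then obtain r d f where z: "z = Lim (at_right 0) (\<lambda>\<beta>. ereal (objective n x r d f \<beta>))"
      and c: "\<forall>j<r. d j > 0 \<and> f j \<in> {0..<1}" by blast
    have d0: "\<forall>j<r. d j \<ge> 0" using c by auto
    have lim: "((\<lambda>\<beta>. ereal (objective n x r d f \<beta>)) \<longlongrightarrow> z) (at_right 0)"
      unfolding z by (rule objective_lim[OF x d0])
    have "((\<lambda>\<beta>. atomic_norm n x - real n * \<beta> / 2) \<longlongrightarrow> atomic_norm n x - real n * 0 / 2) (at_right 0)"
      by (intro tendsto_intros) simp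
    hence lim2: "((\<lambda>\<beta>. ereal (atomic_norm n x - real n * \<beta> / 2)) \<longlongrightarrow> ereal (atomic_norm n x)) (at_right 0)"
      by (intro tendsto_ereal) simp
    have ev: "\<forall>\<^sub>F \<beta> in at_right 0. ereal (atomic_norm n x - real n * \<beta> / 2) \<le> ereal (objective n x r d f \<beta>)"
      using eventually_at_right_less[of "0::real"]
      by (rule eventually_mono) (use lower_bound[OF n x _ c] in simp)
    show "ereal (atomic_norm n x) \<le> z"
      by (rule tendsto_le[OF _ lim lim2 ev]) simp
  qed
  have le: "Inf ?S \<le> ereal (atomic_norm n x)"
  proof (rule ereal_le_epsilon2)
    fix e :: real assume e: "e > 0"
    let ?D = "{(\<Sum>k<r. cmod (s k)) | (r::nat) (s::nat\<Rightarrow>complex) (f::nat\<Rightarrow>real).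
      (\<forall>k<r. f k \<in> {0..<1}) \<and> x = vec n (\<lambda>i. \<Sum>k<r. s k * (atom n (f k) $ i))}"
    have ne: "?D \<noteq> {}" using assms(3,4) by blast
    have "Inf ?D < atomic_norm n x + e / 2" using e unfolding atomic_norm_def by simp
    from cInf_lessD[OF ne this] obtain R :: nat and s' :: "nat \<Rightarrow> complex" and F :: "nat \<Rightarrow> real" where
      R: "(\<Sum>k<R. cmod (s' k)) < atomic_norm n x + e / 2" "\<forall>k<R. F k \<in> {0..<1}"
         "x = vec n (\<lambda>i. \<Sum>k<R. s' k * (atom n (F k) $ i))" by fastforce
    define s2 where "s2 k = (if k < R then s' k else 0)" for k
    define F2 where "F2 k = (if k < R then F k else 0)" for k
    define \<delta> where "\<delta> = e / real (Suc R)"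
    have dl: "\<delta> > 0" using e by (simp add: \<delta>_def)
    have x2: "x = vec n (\<lambda>i. \<Sum>k<Suc R. s2 k * (atom n (F2 k) $ i))"
      unfolding R(3) by (intro eq_vecI) (auto simp: s2_def F2_def intro!: sum.cong)
    have sum2: "(\<Sum>k<Suc R. cmod (s2 k)) = (\<Sum>k<R. cmod (s' k))"
      by (auto simp: s2_def intro!: sum.cong)
    let ?d = "\<lambda>j. cmod (s2 j) + \<delta>"
    let ?z = "Lim (at_right 0) (\<lambda>\<beta>. ereal (objective n x (Suc R) ?d F2 \<beta>))"
    have zS: "?z \<in> ?S"
    proof -
      have "\<forall>j<Suc R. ?d j > 0 \<and> F2 j \<in> {0..<1}" using R(2) dl by (auto simp: F2_def intro: add_nonneg_pos)
      thus ?thesis by blast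
    qed
    have d0: "\<forall>j<Suc R. ?d j \<ge> 0" using dl by auto
    have lim: "((\<lambda>\<beta>. ereal (objective n x (Suc R) ?d F2 \<beta>)) \<longlongrightarrow> ?z) (at_right 0)"
      by (rule objective_lim[OF x d0])
    have ev: "\<forall>\<^sub>F \<beta> in at_right 0. ereal (objective n x (Suc R) ?d F2 \<beta>) \<le> ereal ((\<Sum>k<Suc R. cmod (s2 k)) + real (Suc R) * \<delta> / 2)"
      using eventually_at_right_less[of "0::real"]
      by (rule eventually_mono) (use upper_bound[OF x x2 _ dl] in simp)
    have "?z \<le> ereal ((\<Sum>k<Suc R. cmod (s2 k)) + real (Suc R) * \<delta> / 2)"
      by (rule tendsto_le[OF _ tendsto_const lim ev]) simp
    also have "(\<Sum>k<Suc R. cmod (s2 k)) + real (Suc R) * \<delta> / 2 \<le> atomic_norm n x + e"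
      using R(1) unfolding sum2 \<delta>_def by simp
    finally have "?z \<le> ereal (atomic_norm n x) + ereal e" by simp
    thus "Inf ?S \<le> ereal (atomic_norm n x) + ereal e"
      using Inf_lower[OF zS] by (rule order_trans[rotated])
  qed
  show ?thesis using ge le by (rule antisym)
qed

end
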